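(* If $T\leq T'$ is derivable in the system of subtyping rules below extended with the reflexivity rule $T\leq T$ and the transitivity rule (from $T\leq T'$ and $T'\leq T''$ infer $T\leq T''$), then $T\leq T'$ is derivable using only the rules below.
   Context: Types: raw types $R ::= \alpha \mid S\rightarrow T$ ($\alpha$ ranging over atomic types), subsidiary types $S ::= \bigcap R$ (a finite formal intersection $R_1\cap\dots\cap R_n$, $n\geq 0$; the empty one is written $\omega$), types $T ::= \bigcup S$ (a finite formal union $S_1\cup\dots\cup S_n$, $n\ge 0$; the empty one is written $\mho$). Intersections and unions are taken modulo associativity and commutativity only (not idempotence); a raw type is identified with a one-element intersection and a subsidiary type with a one-element union. Subtyping rules ($S,S',S'',S_i$ subsidiary types; $T,T',T'',T_i$ types; $i$ over a finite, possibly empty, index set): $\alpha\leq\alpha$; from $S'\leq S$ and $T\leq T'$ infer $S\rightarrow T\leq S'\rightarrow T'$; from $S\leq S'$ infer $S\cap S''\leq S'$; from $S\leq S_i$ for all $i$ infer $S\leq\bigcap_i S_i$; from $T\leq T'$ infer $T\leq T''\cup T'$; from $T_i\leq T$ for all $i$ infer $\bigcup_i T_i\leq T$. *)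

theory Defs
  imports "HOL-Library.Multiset"
begin

text \<open>A subsidiary type is a finite formal
intersection of raw types (multiset of raw types, modulo AC only, no idempotence);
a type is a finite formal union of subsidiary types (multiset of subsidiary types).\<close>

datatype 'a raw = Atom 'a | Arr "'a raw multiset" "'a raw multiset multiset"

type_synonym 'a subs = "'a raw multiset"
type_synonym 'a ty = "'a raw multiset multiset"

text \<open>Identifications: a raw type R is the subsidiary type {#R#}; a subsidiary
type S is the type {#S#}.  Intersection of subsidiary types is multiset sum
(on 'a subs); union of types is multiset sum (on 'a ty).\<close>

inductive sub :: "'a ty \<Rightarrow> 'a ty \<Rightarrow> bool" where
  atom: "sub {#{#Atom a#}#} {#{#Atom a#}#}"
| arr: "sub {#S'#} {#S#} \<Longrightarrow> sub T T' \<Longrightarrow> sub {#{#Arr S T#}#} {#{#Arr S' T'#}#}"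
| inter_left: "sub {#S#} {#S'#} \<Longrightarrow> sub {#S + S''#} {#S'#}"
| inter_right: "(\<And>Si. Si \<in># Ss \<Longrightarrow> sub {#S#} {#Si#}) \<Longrightarrow> sub {#S#} {#sum_mset Ss#}"
| union_right: "sub T T' \<Longrightarrow> sub T (T'' + T')"
| union_left: "(\<And>Ti. Ti \<in># Ts \<Longrightarrow> sub Ti T) \<Longrightarrow> sub (sum_mset Ts) T"

inductive sub_rt :: "'a ty \<Rightarrow> 'a ty \<Rightarrow> bool" where
  atom: "sub_rt {#{#Atom a#}#} {#{#Atom a#}#}"
| arr: "sub_rt {#S'#} {#S#} \<Longrightarrow> sub_rt T T' \<Longrightarrow> sub_rt {#{#Arr S T#}#} {#{#Arr S' T'#}#}"
| inter_left: "sub_rt {#S#} {#S'#} \<Longrightarrow> sub_rt {#S + S''#} {#S'#}"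
| inter_right: "(\<And>Si. Si \<in># Ss \<Longrightarrow> sub_rt {#S#} {#Si#}) \<Longrightarrow> sub_rt {#S#} {#sum_mset Ss#}"
| union_right: "sub_rt T T' \<Longrightarrow> sub_rt T (T'' + T')"
| union_left: "(\<And>Ti. Ti \<in># Ts \<Longrightarrow> sub_rt Ti T) \<Longrightarrow> sub_rt (sum_mset Ts) T"
| refl: "sub_rt T T"
| trans: "sub_rt T T' \<Longrightarrow> sub_rt T' T'' \<Longrightarrow> sub_rt T T''"

end

theory Submission imports Defs begin

lemma sum_single:
  assumes "sum_mset Ts = {#x#}" shows "\<exists>Ti\<in>#Ts. Ti = {#x#}"
proof -
  have "x \<in># sum_mset Ts" using assms by simp
  then obtain Ti where Ti: "Ti \<in># Ts" "x \<in># Ti" by (auto simp: in_Union_mset_iff)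
  then obtain R where "Ts = add_mset Ti R" by (metis multi_member_split)
  then have "Ti + sum_mset R = {#x#}" using assms by simp
  then have "Ti = {#x#}" using Ti(2) by (auto simp: union_is_single)
  with Ti show ?thesis by blast
qed

lemma sub_empty: "sub {#} T"
  using sub.union_left[of "{#}" T] by simp

lemma inv1: "sub T T' \<Longrightarrow> S \<in># T \<Longrightarrow> sub {#S#} T'"
proof (induction arbitrary: S rule: sub.induct)
  case (union_right T T' T'')
  then show ?case by (simp add: sub.union_right)
next
  case (union_left Ts T)
  then show ?case by (auto simp: in_Union_mset_iff)
qed (auto intro: sub.intros)

lemma build1: "(\<And>S. S \<in># T \<Longrightarrow> sub {#S#} T') \<Longrightarrow> sub T T'"
  using sub.union_left[of "image_mset (\<lambda>S. {#S#}) T" T'] by auto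

lemma inv2: "sub T T' \<Longrightarrow> T = {#S#} \<Longrightarrow> \<exists>S'\<in>#T'. sub {#S#} {#S'#}"
proof (induction arbitrary: S rule: sub.induct)
  case (union_right T T' T'')
  then show ?case by auto
next
  case (union_left Ts T)
  then obtain Ti where "Ti \<in># Ts" "Ti = {#S#}" using sum_single by metis
  then show ?case using union_left.IH by blast
qed (auto intro: sub.intros)

lemma build2: "S' \<in># T' \<Longrightarrow> sub {#S#} {#S'#} \<Longrightarrow> sub {#S#} T'"
  by (metis sub.union_right insert_DiffM2 add_mset_add_single)

lemma build3: "(\<And>R'. R' \<in># S' \<Longrightarrow> sub {#S#} {#{#R'#}#}) \<Longrightarrow> sub {#S#} {#S'#}"
  using sub.inter_right[of "image_mset (\<lambda>R. {#R#}) S'" S] by auto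

lemma build4: "R \<in># S \<Longrightarrow> sub {#{#R#}#} {#{#R'#}#} \<Longrightarrow> sub {#S#} {#{#R'#}#}"
  by (metis sub.inter_left insert_DiffM add_mset_add_single add.commute)

lemma inv3: "sub T T' \<Longrightarrow> T = {#S#} \<Longrightarrow> T' = {#S'#} \<Longrightarrow> R' \<in># S' \<Longrightarrow> sub {#S#} {#{#R'#}#}"
proof (induction arbitrary: S S' rule: sub.induct)
  case (atom a)
  then show ?case by (auto intro: sub.intros)
next
  case (arr S' S T T')
  then show ?case by (auto intro: sub.intros)
next
  case (inter_left S S' S'')
  then show ?case by (auto intro: sub.intros)
next
  case (inter_right Ss S)
  then obtain Si where "Si \<in># Ss" "R' \<in># Si" by (auto simp: in_Union_mset_iff)
  then show ?case using inter_right by auto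
next
  case (union_right T T' T'')
  show ?case
  proof (cases "T' = {#}")
    case True
    with union_right inv2 show ?thesis by fastforce
  next
    case False
    with union_right.prems have "T' = {#S'#}"
      by (auto simp: union_is_single)
    with union_right show ?thesis by auto
  qed
next
  case (union_left Ts T)
  then obtain Ti where "Ti \<in># Ts" "Ti = {#S#}" using sum_single by metis
  then show ?case using union_left by blast
qed

lemma inv4: "sub T T' \<Longrightarrow> T = {#S#} \<Longrightarrow> T' = {#{#R'#}#} \<Longrightarrow> \<exists>R\<in>#S. sub {#{#R#}#} {#{#R'#}#}"
proof (induction arbitrary: S rule: sub.induct)
  case (atom a)
  then show ?case by (auto intro: sub.intros)
next
  case (arr S' S T T')
  then show ?case by (auto intro: sub.intros)
next
  case (inter_left S S' S'')
  then show ?case by auto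
next
  case (inter_right Ss S)
  then obtain Si where "Si \<in># Ss" "Si = {#R'#}" using sum_single by (metis single_eq_single)
  then show ?case using inter_right by auto
next
  case (union_right T T' T'')
  show ?case
  proof (cases "T' = {#}")
    case True
    with union_right inv2 show ?thesis by fastforce
  next
    case False
    with union_right.prems have "T' = {#{#R'#}#}"
      by (auto simp: union_is_single)
    with union_right show ?thesis by auto
  qed
next
  case (union_left Ts T)
  then obtain Ti where "Ti \<in># Ts" "Ti = {#S#}" using sum_single by metis
  then show ?case using union_left by blast
qed

lemma inv5: "sub T T' \<Longrightarrow> T = {#{#R#}#} \<Longrightarrow> T' = {#{#R'#}#} \<Longrightarrow>
   (\<exists>a. R = Atom a \<and> R' = Atom a) \<or>
   (\<exists>S U S' U'. R = Arr S U \<and> R' = Arr S' U' \<and> sub {#S'#} {#S#} \<and> sub U U')"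
proof (induction arbitrary: R R' rule: sub.induct)
  case (inter_left S S' S'')
  have e: "S + S'' = {#R#}" "S' = {#R'#}" using inter_left.prems by auto
  show ?case
  proof (cases "S = {#}")
    case True
    with inter_left.hyps e inv4[of "{#S#}" "{#S'#}" S R'] show ?thesis by auto
  next
    case False
    with e have "S = {#R#}" by (auto simp: union_is_single)
    with inter_left e show ?thesis by auto
  qed
next
  case (inter_right Ss S)
  then obtain Si where "Si \<in># Ss" "Si = {#R'#}" using sum_single by (metis single_eq_single)
  then show ?case using inter_right by auto
next
  case (union_right T T' T'')
  show ?case
  proof (cases "T' = {#}")
    case True
    with union_right inv2 show ?thesis by fastforce
  next
    case False
    with union_right.prems have "T' = {#{#R'#}#}"
      by (auto simp: union_is_single)
    with union_right show ?thesis by auto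
  qed
next
  case (union_left Ts T)
  then obtain Ti where "Ti \<in># Ts" "Ti = {#{#R#}#}" using sum_single by metis
  then show ?case using union_left by blast
qed auto

lemma refl_raw: "sub {#{#R#}#} {#{#R#}#}"
proof (induction R)
  case (Atom x)
  then show ?case by (rule sub.atom)
next
  case (Arr S T)
  have "sub {#S#} {#S#}"
    by (rule build3, rule build4) (use Arr.IH(1) in auto)
  moreover have "sub T T"
  proof (rule build1)
    fix S' assume s: "S' \<in># T"
    have "sub {#S'#} {#S'#}"
      by (rule build3, rule build4) (use Arr.IH(2) s in auto)
    then show "sub {#S'#} T" by (rule build2[OF s])
  qed
  ultimately show ?case by (rule sub.arr)
qed

lemma refl_sub: "sub T T"
proof (rule build1)
  fix S' assume s: "S' \<in># T"
  have "sub {#S'#} {#S'#}"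
    by (rule build3, rule build4) (use refl_raw in auto)
  then show "sub {#S'#} T" by (rule build2[OF s])
qed

definition P :: "'a raw \<Rightarrow> bool" where
  "P R2 \<longleftrightarrow> (\<forall>R1 R3. sub {#{#R1#}#} {#{#R2#}#} \<longrightarrow> sub {#{#R2#}#} {#{#R3#}#} \<longrightarrow> sub {#{#R1#}#} {#{#R3#}#})"

lemma transS:
  assumes h: "\<And>R. R \<in># S2 \<Longrightarrow> P R" and a: "sub {#S1#} {#S2#}" and b: "sub {#S2#} {#S3#}"
  shows "sub {#S1#} {#S3#}"
proof (rule build3)
  fix R3 assume r3: "R3 \<in># S3"
  have "sub {#S2#} {#{#R3#}#}" using inv3[OF b HOL.refl HOL.refl r3] .
  then obtain R2 where r2: "R2 \<in># S2" "sub {#{#R2#}#} {#{#R3#}#}" using inv4 by blast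
  have "sub {#S1#} {#{#R2#}#}" using inv3[OF a HOL.refl HOL.refl r2(1)] .
  then obtain R1 where r1: "R1 \<in># S1" "sub {#{#R1#}#} {#{#R2#}#}" using inv4 by blast
  have "sub {#{#R1#}#} {#{#R3#}#}" using h[OF r2(1)] r1(2) r2(2) unfolding P_def by blast
  then show "sub {#S1#} {#{#R3#}#}" using r1(1) build4 by blast
qed

lemma transT:
  assumes h: "\<And>S R. S \<in># T2 \<Longrightarrow> R \<in># S \<Longrightarrow> P R" and a: "sub T1 T2" and b: "sub T2 T3"
  shows "sub T1 T3"
proof (rule build1)
  fix S1 assume s1: "S1 \<in># T1"
  have "sub {#S1#} T2" using inv1[OF a s1] .
  then obtain S2 where s2: "S2 \<in># T2" "sub {#S1#} {#S2#}" using inv2 by blast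
  have "sub {#S2#} T3" using inv1[OF b s2(1)] .
  then obtain S3 where s3: "S3 \<in># T3" "sub {#S2#} {#S3#}" using inv2 by blast
  have "sub {#S1#} {#S3#}" using transS[OF _ s2(2) s3(2)] h s2(1) by blast
  then show "sub {#S1#} T3" using s3(1) build2 by blast
qed

lemma P_all: "P R"
proof (induction R)
  case (Atom x)
  show ?case unfolding P_def
  proof (intro allI impI)
    fix R1 R3 assume "sub {#{#R1#}#} {#{#Atom x#}#}" "sub {#{#Atom x#}#} {#{#R3#}#}"
    then have "R1 = Atom x" "R3 = Atom x" using inv5 by fastforce+
    then show "sub {#{#R1#}#} {#{#R3#}#}" by (simp add: sub.atom)
  qed
next
  case (Arr S2 U2)
  show ?case unfolding P_def
  proof (intro allI impI)
    fix R1 R3 assume a: "sub {#{#R1#}#} {#{#Arr S2 U2#}#}" and b: "sub {#{#Arr S2 U2#}#} {#{#R3#}#}"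
    from inv5[OF a HOL.refl HOL.refl] obtain S1 U1 where 1: "R1 = Arr S1 U1" "sub {#S2#} {#S1#}" "sub U1 U2" by auto
    from inv5[OF b HOL.refl HOL.refl] obtain S3 U3 where 3: "R3 = Arr S3 U3" "sub {#S3#} {#S2#}" "sub U2 U3" by auto
    have "sub {#S3#} {#S1#}" using transS[OF _ 3(2) 1(2)] Arr.IH(1) by blast
    moreover have "sub U1 U3" using transT[OF _ 1(3) 3(3)] Arr.IH(2) by blast
    ultimately show "sub {#{#R1#}#} {#{#R3#}#}" using 1(1) 3(1) by (simp add: sub.arr)
  qed
qed

lemma trans_sub: "sub T1 T2 \<Longrightarrow> sub T2 T3 \<Longrightarrow> sub T1 T3"
  using transT P_all by blast

theorem lemma3p4:
  fixes T T' :: "'a ty"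
  assumes "sub_rt T T'"
  shows "sub T T'"
  using assms
proof (induction rule: sub_rt.induct)
  case (inter_right Ss S)
  then show ?case by (auto intro: sub.inter_right)
next
  case (union_left Ts T)
  then show ?case by (auto intro: sub.union_left)
next
  case (trans T T' T'')
  then show ?case using trans_sub by blast
qed (auto intro: sub.intros refl_sub)

end
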